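(* Let $\rho\in(0,1)$. If $\mathbf a=(x_1,y_1)\in\mathbb R^2$ satisfies $\mathbf a\neq\mathbf a^*$ and $K(\mathbf a,\mathbf b^* )\le 0$, then $x_1+y_1<0$ and either $x_1^2+y_1^2<2x_2^{*2}$ or $x_1+y_1\le -2x_2^*$.
   Context: Standing setup. Fix $\sigma_x,\sigma_y>0$ and $\rho\in(-1,1)$, and let $(\xi,\eta)$ be a bivariate normal random vector with mean $(0,0)$ and covariance matrix $\Sigma=\begin{pmatrix}\sigma_x^2&\rho\sigma_x\sigma_y\\ \rho\sigma_x\sigma_y&\sigma_y^2\end{pmatrix}$. Player I (the minimizer) chooses $\mathbf a=(x_1,y_1)\in\mathbb R^2$ and Player II (the maximizer) chooses $\mathbf b=(x_2,y_2)\in\mathbb R^2$. Let $C_1(\mathbf a,\mathbf b)=\{(x,y):(x_1-x)^2+(y_1-y)^2<(x_2-x)^2+(y_2-y)^2\}$ and $C_2(\mathbf a,\mathbf b)=\{(x,y):(x_1-x)^2+(y_1-y)^2>(x_2-x)^2+(y_2-y)^2\}$. The payoff to Player II (paid by Player I) is $K(\mathbf a,\mathbf b)=x_1+y_1$ if $\mathbf a=\mathbf b$, and $K(\mathbf a,\mathbf b)=(x_1+y_1)\,P((\xi,\eta)\in C_1(\mathbf a,\mathbf b))+(x_2+y_2)\,P((\xi,\eta)\in C_2(\mathbf a,\mathbf b))$ if $\mathbf a\neq\mathbf b$. For $\mathbf a=(x,y)$ write $-\mathbf a=(-x,-y)$. Let $x_2^*=\frac{\sqrt{2\pi(\sigma_x^2+2\rho\sigma_x\sigma_y+\sigma_y^2)}}{4}$,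 $\mathbf b^*=(x_2^*,x_2^* )$ and $\mathbf a^*=(-x_2^*,-x_2^* )$. *)

theory Defs
  imports "HOL-Probability.Probability"
begin

text \<open>Density of the centred bivariate normal law with standard deviations sx, sy and
  correlation r (covariance matrix [[sx^2, r sx sy],[r sx sy, sy^2]]).\<close>
definition bvn_pdf :: "real \<Rightarrow> real \<Rightarrow> real \<Rightarrow> real \<times> real \<Rightarrow> real" where
  "bvn_pdf sx sy r p = (case p of (x, y) \<Rightarrow>
     exp (- (x^2 / sx^2 - 2 * r * x * y / (sx * sy) + y^2 / sy^2) / (2 * (1 - r^2)))
     / (2 * pi * sx * sy * sqrt (1 - r^2)))"

definition bvn :: "real \<Rightarrow> real \<Rightarrow> real \<Rightarrow> (real \<times> real) measure" where
  "bvn sx sy r = density lborel (\<lambda>p. ennreal (bvn_pdf sx sy r p))"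

definition C1 :: "real \<times> real \<Rightarrow> real \<times> real \<Rightarrow> (real \<times> real) set" where
  "C1 a b = {(x, y). (fst a - x)^2 + (snd a - y)^2 < (fst b - x)^2 + (snd b - y)^2}"

definition C2 :: "real \<times> real \<Rightarrow> real \<times> real \<Rightarrow> (real \<times> real) set" where
  "C2 a b = {(x, y). (fst a - x)^2 + (snd a - y)^2 > (fst b - x)^2 + (snd b - y)^2}"

text \<open>Payoff to Player II.\<close>
definition K :: "real \<Rightarrow> real \<Rightarrow> real \<Rightarrow> real \<times> real \<Rightarrow> real \<times> real \<Rightarrow> real" where
  "K sx sy r a b = (if a = b then fst a + snd a
     else (fst a + snd a) * measure (bvn sx sy r) (C1 a b)
        + (fst b + snd b) * measure (bvn sx sy r) (C2 a b))"

definition x2star :: "real \<Rightarrow> real \<Rightarrow> real \<Rightarrow> real" where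
  "x2star sx sy r = sqrt (2 * pi * (sx^2 + 2 * r * sx * sy + sy^2)) / 4"

definition bstar :: "real \<Rightarrow> real \<Rightarrow> real \<Rightarrow> real \<times> real" where
  "bstar sx sy r = (x2star sx sy r, x2star sx sy r)"

definition astar :: "real \<Rightarrow> real \<Rightarrow> real \<Rightarrow> real \<times> real" where
  "astar sx sy r = (- x2star sx sy r, - x2star sx sy r)"

end

theory Submission
  imports Defs "HOL-Analysis.Analysis"
begin

lemma pdf_pos:
  assumes "sx > 0" "sy > 0" "\<bar>r\<bar> < 1"
  shows "bvn_pdf sx sy r p > 0"
proof -
  have "r^2 < 1" using assms by (simp add: abs_square_less_1)
  then show ?thesis using assms by (auto simp: bvn_pdf_def split: prod.splits)
qed

lemma pdf_even: "bvn_pdf sx sy r (- p) = bvn_pdf sx sy r p"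
  by (cases p) (simp add: bvn_pdf_def)

lemma pdf_meas[measurable]: "bvn_pdf sx sy r \<in> borel_measurable borel"
proof -
  have "bvn_pdf sx sy r \<in> borel_measurable (borel \<Otimes>\<^sub>M borel)"
    unfolding bvn_pdf_def by measurable
  then show ?thesis by (simp add: borel_prod)
qed

lemma quad_bound:
  fixes u v r :: real
  assumes "0 < r" "r < 1"
  shows "(u^2 + v^2) / 4 \<le> (u^2 - 2 * r * u * v + v^2) / (2 * (1 - r^2))"
proof -
  have a: "2 * u * v \<le> u^2+v^2" using sum_squares_ge_zero[of "u-v" 0] by (simp add: power2_eq_square algebra_simps)
  have "r * (2 * u * v) \<le> r * (u^2+v^2)" using a assms by (intro mult_left_mono) auto
  then have b: "(1-r) * (u^2+v^2) \<le> u^2 - 2 * r * u * v + v^2"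
    by (simp add: algebra_simps power2_eq_square)
  have c: "0 < 2 * (1-r^2)" using mult_strict_mono[of r 1 r 1] assms by (simp add: power2_eq_square)
  have "(u^2+v^2)/4  *  (2 * (1-r^2)) \<le> (1-r) * (u^2+v^2)"
  proof -
    have "(u^2+v^2)/4  *  (2 * (1-r^2)) = (1-r) * (u^2+v^2)  *  ((1+r)/2)" by (simp add: power2_eq_square field_simps)
    also have "\<dots> \<le> (1-r) * (u^2+v^2)  *  1" using assms by (intro mult_left_mono) auto
    finally show ?thesis by simp
  qed
  with b have "(u^2+v^2)/4  *  (2 * (1-r^2)) \<le> u^2 - 2 * r * u * v + v^2" by linarith
  with c show ?thesis by (simp add: le_divide_eq)
qed

lemma pdf_bound:
  assumes "sx > 0" "sy > 0" "0 < r" "r < 1"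
  shows "bvn_pdf sx sy r (x, y) \<le> (1 / (2 * pi * sx * sy * sqrt (1 - r^2))) * exp (- (x^2) / (4 * sx^2)) * exp (- (y^2) / (4 * sy^2))"
proof -
  have r2: "r^2 < 1" using mult_strict_mono[of r 1 r 1] assms by (simp add: power2_eq_square)
  have q: "((x/sx)^2 + (y/sy)^2) / 4 \<le> ((x/sx)^2 - 2 * r * (x/sx) * (y/sy) + (y/sy)^2) / (2 * (1 - r^2))"
    using quad_bound[OF assms(3,4)] .
  have q2: "((x/sx)^2 - 2 * r * (x/sx) * (y/sy) + (y/sy)^2) = (x^2 / sx^2 - 2 * r * x * y / (sx * sy) + y^2 / sy^2)"
    by (simp add: power_divide)
  have q3: "((x/sx)^2 + (y/sy)^2) / 4 = x^2 / (4 * sx^2) + y^2 / (4 * sy^2)"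
    by (simp add: power_divide field_simps)
  have ex: "exp (- (x^2 / sx^2 - 2 * r * x * y / (sx * sy) + y^2 / sy^2) / (2 * (1 - r^2)))
      \<le> exp (- (x^2) / (4 * sx^2)) * exp (- (y^2) / (4 * sy^2))"
  proof -
    have "- (x^2 / sx^2 - 2 * r * x * y / (sx * sy) + y^2 / sy^2) / (2 * (1 - r^2)) \<le> - (x^2) / (4 * sx^2) + - (y^2) / (4 * sy^2)"
      using q unfolding q2 q3 minus_divide_left[symmetric] by linarith
    then show ?thesis by (simp add: exp_add[symmetric])
  qed
  have D: "0 < 2 * pi * sx * sy * sqrt (1 - r^2)" using assms r2 by simp
  show ?thesis unfolding bvn_pdf_def using ex D
    by (simp add: divide_right_mono)
qed

lemma gauss_nn_fin:
  assumes "s > 0"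
  shows "(\<integral>\<^sup>+x. ennreal (exp (- (x^2) / (4 * s^2))) \<partial>lborel) < \<infinity>"
proof -
  have e: "exp (- (x^2) / (4 * s^2)) = sqrt (2 * pi * (sqrt 2 * s)^2) * normal_density 0 (sqrt 2 * s) x" for x
    using assms by (simp add: normal_density_def power_mult_distrib)
  have "(\<integral>\<^sup>+x. ennreal (normal_density 0 (sqrt 2 * s) x) \<partial>lborel) = 1"
    using assms by (subst nn_integral_eq_integral) (auto intro: integrable_normal_density)
  then have "(\<integral>\<^sup>+x. ennreal (exp (- (x^2) / (4 * s^2))) \<partial>lborel) = ennreal (sqrt (2 * pi * (sqrt 2 * s)^2))"
    unfolding e by (simp add: ennreal_mult nn_integral_cmult)
  then show ?thesis by simp
qed

lemma bvn_finite:
  assumes "sx > 0" "sy > 0" "0 < r" "r < 1"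
  shows "finite_measure (bvn sx sy r)"
proof (rule finite_measureI)
  define A where "A = 1 / (2 * pi * sx * sy * sqrt (1 - r^2))"
  define e1 where "e1 = (\<lambda>x::real. exp (- (x^2) / (4 * sx^2)))"
  define e2 where "e2 = (\<lambda>x::real. exp (- (x^2) / (4 * sy^2)))"
  have r2: "r^2 < 1" using mult_strict_mono[of r 1 r 1] assms by (simp add: power2_eq_square)
  have A0: "A \<ge> 0" unfolding A_def using assms r2 by simp
  have [measurable]: "e1 \<in> borel_measurable borel" "e2 \<in> borel_measurable borel"
    unfolding e1_def e2_def by measurable
  have I1: "(\<integral>\<^sup>+x. ennreal (e1 x) \<partial>lborel) < \<infinity>" unfolding e1_def by (rule gauss_nn_fin[OF assms(1)])
  have I2: "(\<integral>\<^sup>+x. ennreal (e2 x) \<partial>lborel) < \<infinity>" unfolding e2_def by (rule gauss_nn_fin[OF assms(2)])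
  have "emeasure (bvn sx sy r) (space (bvn sx sy r)) = (\<integral>\<^sup>+p. ennreal (bvn_pdf sx sy r p) \<partial>lborel)"
    unfolding bvn_def by (simp add: emeasure_density)
  also have "\<dots> \<le> (\<integral>\<^sup>+p. ennreal (A * e1 (fst p) * e2 (snd p)) \<partial>lborel)"
    apply (rule nn_integral_mono)
    subgoal for p using pdf_bound[OF assms, of "fst p" "snd p"] unfolding A_def e1_def e2_def
      by (cases p) (simp add: ennreal_leI)
    done
  also have "\<dots> = (\<integral>\<^sup>+p. ennreal (A * e1 (fst p) * e2 (snd p)) \<partial>(lborel \<Otimes>\<^sub>M lborel))"
    by (simp add: lborel_prod)
  also have "\<dots> = (\<integral>\<^sup>+x. \<integral>\<^sup>+y. ennreal (A * e1 x * e2 y) \<partial>lborel \<partial>lborel)"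
    by (subst lborel.nn_integral_fst[symmetric]) auto
  also have "\<dots> = (\<integral>\<^sup>+x. ennreal (A * e1 x) * (\<integral>\<^sup>+y. ennreal (e2 y) \<partial>lborel) \<partial>lborel)"
  proof (rule nn_integral_cong)
    fix x
    have "(\<integral>\<^sup>+y. ennreal (A * e1 x * e2 y) \<partial>lborel) = (\<integral>\<^sup>+y. ennreal (A * e1 x) * ennreal (e2 y) \<partial>lborel)"
      using A0 by (intro nn_integral_cong) (simp add: ennreal_mult e1_def e2_def)
    also have "\<dots> = ennreal (A * e1 x) * (\<integral>\<^sup>+y. ennreal (e2 y) \<partial>lborel)"
      by (rule nn_integral_cmult) simp
    finally show "(\<integral>\<^sup>+y. ennreal (A * e1 x * e2 y) \<partial>lborel) = ennreal (A * e1 x) * (\<integral>\<^sup>+y. ennreal (e2 y) \<partial>lborel)" .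
  qed
  also have "\<dots> = ennreal A * (\<integral>\<^sup>+x. ennreal (e1 x) \<partial>lborel) * (\<integral>\<^sup>+y. ennreal (e2 y) \<partial>lborel)"
  proof -
    have "(\<integral>\<^sup>+x. ennreal (A * e1 x) \<partial>lborel) = (\<integral>\<^sup>+x. ennreal A * ennreal (e1 x) \<partial>lborel)"
      using A0 by (intro nn_integral_cong) (simp add: ennreal_mult e1_def)
    also have "\<dots> = ennreal A * (\<integral>\<^sup>+x. ennreal (e1 x) \<partial>lborel)"
      by (rule nn_integral_cmult) simp
    finally have h: "(\<integral>\<^sup>+x. ennreal (A * e1 x) \<partial>lborel) = ennreal A * (\<integral>\<^sup>+x. ennreal (e1 x) \<partial>lborel)" .
    show ?thesis by (subst nn_integral_multc) (simp_all add: h)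
  qed
  also have "\<dots> < \<infinity>" using I1 I2 by (simp add: ennreal_mult_less_top)
  finally show "emeasure (bvn sx sy r) (space (bvn sx sy r)) \<noteq> \<infinity>" by simp
qed

lemma sets_bvn[simp, measurable_cong]: "sets (bvn sx sy r) = sets borel"
  unfolding bvn_def by simp

lemma open_not_null_lborel:
  fixes S :: "(real \<times> real) set"
  assumes "open S" "S \<noteq> {}"
  shows "emeasure lborel S \<noteq> 0"
proof
  assume h: "emeasure lborel S = 0"
  have "S \<in> sets lborel" using assms by simp
  then have "S \<in> null_sets lborel" using h by auto
  then have "S \<in> null_sets lebesgue" by (rule null_sets_completionI)
  then have "negligible S" by (simp add: negligible_iff_null_sets)
  with open_not_negligible[OF assms] show False by simp
qed

lemma bvn_open_pos:
  fixes U :: "(real \<times> real) set"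
  assumes "sx > 0" "sy > 0" "0 < r" "r < 1" "open U" "U \<noteq> {}"
  shows "measure (bvn sx sy r) U > 0"
proof -
  interpret finite_measure "bvn sx sy r" by (rule bvn_finite[OF assms(1-4)])
  have Ub: "U \<in> sets borel" using assms by simp
  have pos: "bvn_pdf sx sy r p > 0" for p using pdf_pos[of sx sy r p] assms by simp
  have "emeasure (bvn sx sy r) U \<noteq> 0"
  proof
    assume "emeasure (bvn sx sy r) U = 0"
    then have "(\<integral>\<^sup>+p. ennreal (bvn_pdf sx sy r p) * indicator U p \<partial>lborel) = 0"
      unfolding bvn_def using Ub by (simp add: emeasure_density)
    then have "AE p in lborel. ennreal (bvn_pdf sx sy r p) * indicator U p = 0"
      using Ub by (subst (asm) nn_integral_0_iff_AE) auto
    then have "AE p in lborel. p \<notin> U"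
      by eventually_elim (use pos in \<open>auto simp: indicator_def less_le\<close>)
    then have "emeasure lborel U = 0" using Ub
      by (subst (asm) AE_iff_measurable[of U]) auto
    with open_not_null_lborel[OF assms(5,6)] show False by simp
  qed
  then show ?thesis using Ub by (simp add: emeasure_eq_measure zero_less_measure_iff)
qed

lemma lborel_uminus2: "distr lborel borel (\<lambda>x::real\<times>real. - x) = lborel"
proof -
  have "lborel = density (distr lborel borel (\<lambda>x::real\<times>real. 0 + (-1::real) *\<^sub>R x)) (\<lambda>_. \<bar>-1::real\<bar>^DIM(real\<times>real))"
    by (rule lborel_affine) simp
  then show ?thesis by (simp add: density_1)
qed

lemma bvn_sym:
  fixes d1 d2 :: real
  shows "emeasure (bvn sx sy r) {p. d1 * fst p + d2 * snd p < 0} = emeasure (bvn sx sy r) {p. d1 * fst p + d2 * snd p > 0}"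
proof -
  let ?S = "{p::real\<times>real. d1 * fst p + d2 * snd p < 0}"
  let ?T = "{p::real\<times>real. d1 * fst p + d2 * snd p > 0}"
  have [measurable]: "?S \<in> sets borel" "?T \<in> sets borel"
    by (intro borel_open open_Collect_less continuous_intros)+
  have "emeasure (bvn sx sy r) ?S = (\<integral>\<^sup>+p. ennreal (bvn_pdf sx sy r p) * indicator ?S p \<partial>lborel)"
    unfolding bvn_def by (simp add: emeasure_density)
  also have "\<dots> = (\<integral>\<^sup>+p. ennreal (bvn_pdf sx sy r p) * indicator ?S p \<partial>distr lborel borel (\<lambda>x::real\<times>real. - x))"
    by (simp add: lborel_uminus2)
  also have "\<dots> = (\<integral>\<^sup>+p. ennreal (bvn_pdf sx sy r (- p)) * indicator ?S (- p) \<partial>lborel)"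
    by (subst nn_integral_distr) auto
  also have "\<dots> = (\<integral>\<^sup>+p. ennreal (bvn_pdf sx sy r p) * indicator ?T p \<partial>lborel)"
    by (intro nn_integral_cong) (auto simp: pdf_even indicator_def)
  also have "\<dots> = emeasure (bvn sx sy r) ?T"
    unfolding bvn_def by (simp add: emeasure_density)
  finally show ?thesis .
qed

theorem mainTheorem9:
  fixes sx sy r x1 y1 :: real
  assumes "sx > 0" and "sy > 0" and "0 < r" and "r < 1"
    and "(x1, y1) \<noteq> astar sx sy r"
    and "K sx sy r (x1, y1) (bstar sx sy r) \<le> 0"
  shows "x1 + y1 < 0 \<and>
    (x1^2 + y1^2 < 2 * (x2star sx sy r)^2 \<or> x1 + y1 \<le> - 2 * x2star sx sy r)"
proof -
  define c where "c = x2star sx sy r"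
  define M where "M = bvn sx sy r"
  interpret finite_measure M unfolding M_def by (rule bvn_finite[OF assms(1-4)])
  have "0 < sx^2 + 2 * r * sx * sy + sy^2" using assms by (simp add: add_pos_pos)
  then have c0: "c > 0" unfolding c_def x2star_def by simp
  have b: "bstar sx sy r = (c, c)" unfolding bstar_def c_def by simp
  have ab: "(x1, y1) \<noteq> (c, c)"
  proof
    assume "(x1, y1) = (c, c)"
    have "K sx sy r (c, c) (c, c) = 2 * c" unfolding K_def by simp
    then have "K sx sy r (x1, y1) (bstar sx sy r) = 2 * c" unfolding b using \<open>(x1, y1) = (c, c)\<close> by simp
    with assms(6) c0 show False by simp
  qed
  define d1 where "d1 = c - x1"
  define d2 where "d2 = c - y1"
  define t where "t = (2 * c^2 - x1^2 - y1^2) / 2"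
  have "d1 \<noteq> 0 \<or> d2 \<noteq> 0" using ab unfolding d1_def d2_def by auto
  then have d0: "d1^2 + d2^2 > 0" by (simp add: sum_power2_gt_zero_iff)
  have C1e: "C1 (x1, y1) (c, c) = {p. d1 * fst p + d2 * snd p < t}"
    unfolding C1_def d1_def d2_def t_def by (auto simp: power2_eq_square field_simps)
  have C2e: "C2 (x1, y1) (c, c) = {p. d1 * fst p + d2 * snd p > t}"
    unfolding C2_def d1_def d2_def t_def by (auto simp: power2_eq_square field_simps)
  have oC1: "open {p::real\<times>real. d1 * fst p + d2 * snd p < t}"
    by (intro open_Collect_less continuous_intros)
  have oC2: "open {p::real\<times>real. d1 * fst p + d2 * snd p > t}"
    by (intro open_Collect_less continuous_intros)
  have m1: "C1 (x1, y1) (c, c) \<in> sets M" unfolding M_def C1e using oC1 by simp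
  have m2: "C2 (x1, y1) (c, c) \<in> sets M" unfolding M_def C2e using oC2 by simp
  define p where "p = measure M (C1 (x1, y1) (c, c))"
  define q where "q = measure M (C2 (x1, y1) (c, c))"
  define s where "s = x1 + y1"
  have Kv: "K sx sy r (x1, y1) (bstar sx sy r) = s * p + 2 * c * q"
    unfolding b K_def if_not_P[OF ab] p_def q_def M_def s_def by simp
  have p0: "p \<ge> 0" unfolding p_def by simp
  have "(c, c) \<in> C2 (x1, y1) (c, c)" unfolding C2_def using ab
    by (simp add: sum_power2_gt_zero_iff)
  then have q0: "q > 0" unfolding q_def M_def C2e
    using bvn_open_pos[OF assms(1-4) oC2] by auto
  have s0: "s < 0"
  proof (rule ccontr)
    assume "\<not> s < 0"
    then have "s * p \<ge> 0" using p0 by simp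
    moreover have "2 * c * q > 0" using c0 q0 by simp
    ultimately show False using assms(6) Kv by linarith
  qed
  have part2: "x1^2 + y1^2 < 2 * c^2 \<or> s \<le> - 2 * c"
  proof (rule ccontr)
    assume "\<not> ?thesis"
    then have t0: "t \<le> 0" and sc: "s > - 2 * c" unfolding t_def by auto
    let ?Hm = "{p::real\<times>real. d1 * fst p + d2 * snd p < 0}"
    let ?Hp = "{p::real\<times>real. d1 * fst p + d2 * snd p > 0}"
    have oHm: "open ?Hm" by (intro open_Collect_less continuous_intros)
    have oHp: "open ?Hp" by (intro open_Collect_less continuous_intros)
    have "emeasure M ?Hm = emeasure M ?Hp" unfolding M_def by (rule bvn_sym)
    then have hh: "measure M ?Hm = measure M ?Hp" by (simp add: measure_def)
    have "(d1, d2) \<in> ?Hp" using d0 by (simp add: power2_eq_square)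
    then have h0: "measure M ?Hp > 0" unfolding M_def using bvn_open_pos[OF assms(1-4) oHp] by auto
    have "p \<le> measure M ?Hm" unfolding p_def C1e
      using t0 oHm by (intro finite_measure_mono) (auto simp: M_def)
    then have ph: "p \<le> measure M ?Hp" using hh by simp
    have qh: "measure M ?Hp \<le> q" unfolding q_def C2e
      using t0 oC2 by (intro finite_measure_mono) (auto simp: M_def)
    have "s * measure M ?Hp \<le> s * p" using ph s0 by (simp add: mult_left_mono_neg)
    moreover have "2 * c * measure M ?Hp \<le> 2 * c * q" using qh c0 by simp
    moreover have "(s + 2 * c) * measure M ?Hp > 0" using sc h0 by simp
    ultimately have "s * p + 2 * c * q > 0" by (simp add: algebra_simps)
    with assms(6) Kv show False by linarith
  qed
  show ?thesis using s0 part2 unfolding s_def c_def by simp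
qed

end
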